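(* Let $h:\mathbb{R}\to\mathbb{R}$ be continuous and let $u_1,u_2$ be linearly independent real solutions of $u''(x)+h(x)u(x)=0$. (i) For any matrix in $GL(2,\mathbb{R})$, the pair of solutions obtained by applying it to $(u_1,u_2)$ is again linearly independent, so the action of $GL(2,\mathbb{R})$ on the span of the solutions induces (via the map of the context) a local isomorphism of the Poincaré upper half plane $\mathbb{H}$. (ii) For real constants $A,B$, not both zero, let $u(x)=Au_1(x)+Bu_2(x)$ and \[ Y(x,\varPhi)=\frac{\varPhi}{\varPhi^2[u(x)]^2+[u'(x)]^2}. \] Then $Y$ (depending on the two parameters $A,B$) is a complete integral of the partial differential equation \[ \left(\frac{\varPhi}{h(x)-\varPhi^{2}}\frac{\partial Y}{\partial x}(x,\varPhi)\right)^{2}+\left(\varPhi\frac{\partial Y}{\partial\varPhi}(x,\varPhi)\right)^{2}=Y^2(x,\varPhi) \] on $\{(x,\varPhi)\mid\varPhi>0,\ \varPhi^2\neq h(x)\}$.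
   Context: For linearly independent solutions $v_1,v_2$ of $u''+hu=0$ with Wronskian $W=v_1'v_2-v_1v_2'$, the map $(x,\varPhi)\mapsto(X,Y)$, $X=X_0\pm W^{-1}\frac{\varPhi^2v_1v_2+v_1'v_2'}{\varPhi^2v_1^2+(v_1')^2}$, $Y=\frac{\varPhi}{\varPhi^2v_1^2+(v_1')^2}$, is a local diffeomorphism pulling back $g_{\mathbb{H}}=(dX^2+dY^2)/Y^2$ on $\{Y>0\}$ to $g_h=\left[(h(x)-\varPhi^2)^2dx^2+d\varPhi^2\right]/\varPhi^2$ on $\{\varPhi>0,\ \varPhi^2\neq h(x)\}$. *)

theory Defs
  imports "HOL-Analysis.Analysis"
begin

definition is_solution :: "(real \<Rightarrow> real) \<Rightarrow> (real \<Rightarrow> real) \<Rightarrow> bool" where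
  "is_solution h u \<longleftrightarrow>
     (\<forall>x. (u has_real_derivative deriv u x) (at x)) \<and>
     (\<forall>x. (deriv u has_real_derivative (- h x * u x)) (at x))"

definition lin_indep2 :: "(real \<Rightarrow> real) \<Rightarrow> (real \<Rightarrow> real) \<Rightarrow> bool" where
  "lin_indep2 v1 v2 \<longleftrightarrow> (\<forall>a b. (\<forall>x. a * v1 x + b * v2 x = 0) \<longrightarrow> a = 0 \<and> b = 0)"

definition wronskian :: "(real \<Rightarrow> real) \<Rightarrow> (real \<Rightarrow> real) \<Rightarrow> real \<Rightarrow> real" where
  "wronskian v1 v2 x = deriv v1 x * v2 x - v1 x * deriv v2 x"

definition Psi :: "(real \<Rightarrow> real) \<Rightarrow> (real \<Rightarrow> real) \<Rightarrow> real \<Rightarrow> real \<Rightarrow> real \<times> real \<Rightarrow> real \<times> real" where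
  "Psi v1 v2 X0 s p = (let x = fst p; \<Phi> = snd p;
      D = \<Phi>\<^sup>2 * (v1 x)\<^sup>2 + (deriv v1 x)\<^sup>2 in
      (X0 + s * (1 / wronskian v1 v2 x) * ((\<Phi>\<^sup>2 * v1 x * v2 x + deriv v1 x * deriv v2 x) / D),
       \<Phi> / D))"

definition upper_half_plane :: "(real \<times> real) set" where
  "upper_half_plane = {p. snd p > 0}"

definition gH :: "real \<times> real \<Rightarrow> real \<times> real \<Rightarrow> real" where
  "gH p v = ((fst v)\<^sup>2 + (snd v)\<^sup>2) / (snd p)\<^sup>2"

definition local_isometry_H :: "(real \<times> real \<Rightarrow> real \<times> real) \<Rightarrow> bool" where
  "local_isometry_H T \<longleftrightarrow>
     T ` upper_half_plane \<subseteq> upper_half_plane \<and>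
     (\<forall>z\<in>upper_half_plane. \<exists>e>0. inj_on T (ball z e)) \<and>
     (\<forall>z\<in>upper_half_plane. \<exists>T'. (T has_derivative T') (at z) \<and>
         (\<forall>v. gH (T z) (T' v) = gH z v))"

section \<open>Complete integral of a first-order PDE F(x,y,z,z_x,z_y) = 0 in two variables,
  with a two-parameter family z = phi a b x y\<close>

definition pd1 :: "(real \<Rightarrow> real \<Rightarrow> real) \<Rightarrow> real \<Rightarrow> real \<Rightarrow> real" where
  "pd1 f s t = deriv (\<lambda>r. f r t) s"

definition pd2 :: "(real \<Rightarrow> real \<Rightarrow> real) \<Rightarrow> real \<Rightarrow> real \<Rightarrow> real" where
  "pd2 f s t = deriv (\<lambda>r. f s r) t"

definition has_partials :: "(real \<Rightarrow> real \<Rightarrow> real) \<Rightarrow> real \<Rightarrow> real \<Rightarrow> bool" where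
  "has_partials f s t \<longleftrightarrow> (\<lambda>r. f r t) differentiable (at s) \<and> (\<lambda>r. f s r) differentiable (at t)"

definition complete_integral ::
  "(real \<Rightarrow> real \<Rightarrow> real \<Rightarrow> real \<Rightarrow> real \<Rightarrow> real) \<Rightarrow> (real \<times> real) set \<Rightarrow> (real \<times> real) set
     \<Rightarrow> (real \<Rightarrow> real \<Rightarrow> real \<Rightarrow> real \<Rightarrow> real) \<Rightarrow> bool" where
  "complete_integral F S P \<phi> \<longleftrightarrow>
     (\<forall>a b x y. (a, b) \<in> P \<and> (x, y) \<in> S \<longrightarrow>
        (let zx = (\<lambda>a b. pd1 (\<phi> a b) x y); zy = (\<lambda>a b. pd2 (\<phi> a b) x y);
             z = (\<lambda>a b. \<phi> a b x y) in
         has_partials (\<phi> a b) x y \<and>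
         F x y (z a b) (zx a b) (zy a b) = 0 \<and>
         has_partials z a b \<and> has_partials zx a b \<and> has_partials zy a b \<and>
         \<comment> \<open>the 2x3 matrix [[z_a, zx_a, zy_a],[z_b, zx_b, zy_b]] has rank 2\<close>
         (pd1 z a b * pd2 zx a b - pd2 z a b * pd1 zx a b \<noteq> 0 \<or>
          pd1 z a b * pd2 zy a b - pd2 z a b * pd1 zy a b \<noteq> 0 \<or>
          pd1 zx a b * pd2 zy a b - pd2 zx a b * pd1 zy a b \<noteq> 0)))"

end

theory Submission
  imports Defs
begin

lemma sol_D1: "is_solution h u \<Longrightarrow> (u has_real_derivative deriv u x) (at x)"
  unfolding is_solution_def by blast
lemma sol_D2: "is_solution h u \<Longrightarrow> (deriv u has_real_derivative (- h x * u x)) (at x)"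
  unfolding is_solution_def by blast

lemma sol_uniq:
  fixes h u :: "real \<Rightarrow> real"
  assumes hc: "continuous_on UNIV h" and s: "is_solution h u"
    and z1: "u x0 = 0" and z2: "deriv u x0 = 0"
  shows "u x = 0"
proof -
  define E where "E t = (u t)\<^sup>2 + (deriv u t)\<^sup>2" for t
  have dE: "(E has_real_derivative (2*u t*deriv u t*(1 - h t))) (at t)" for t
    unfolding E_def
    by (rule derivative_eq_intros sol_D1[OF s] sol_D2[OF s] refl)+ (simp add: algebra_simps)
  have E0: "E x0 = 0" using z1 z2 by (simp add: E_def)
  have Ege: "E t \<ge> 0" for t by (simp add: E_def)
  have "bounded (h ` {min x0 x..max x0 x})"
    by (rule compact_imp_bounded[OF compact_continuous_image[OF continuous_on_subset[OF hc] compact_Icc]]) auto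
  then obtain B where B0: "\<forall>t\<in>{min x0 x..max x0 x}. \<bar>h t\<bar> \<le> B"
    unfolding bounded_real by auto
  then have B: "\<And>t. t \<in> {min x0 x..max x0 x} \<Longrightarrow> \<bar>h t\<bar> \<le> B" by blast
  define K where "K = B + 1"
  have K0: "K \<ge> 0" using B[of x0] by (auto simp: K_def)
  have bound: "\<bar>2*u t*deriv u t*(1 - h t)\<bar> \<le> K * E t" if "t \<in> {min x0 x..max x0 x}" for t
  proof -
    have a: "\<bar>2*u t*deriv u t\<bar> \<le> E t"
      unfolding E_def using sum_squares_bound[of "\<bar>u t\<bar>" "\<bar>deriv u t\<bar>"]
      by (simp add: abs_mult)
    have b: "\<bar>1 - h t\<bar> \<le> K" using B[OF that] by (auto simp: K_def)
    have "\<bar>2*u t*deriv u t*(1 - h t)\<bar> = \<bar>2*u t*deriv u t\<bar> * \<bar>1 - h t\<bar>" by (simp add: abs_mult)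
    also have "\<dots> \<le> E t * K" by (rule mult_mono[OF a b]) (auto simp: Ege)
    finally show ?thesis by (simp add: mult.commute)
  qed
  have "E x = 0"
  proof (cases "x0 \<le> x")
    case True
    define F where "F t = E t * exp (-K*t)" for t
    have "F x \<le> F x0"
    proof (rule DERIV_nonpos_imp_nonincreasing[of x0 x F, OF True])
      fix t assume t: "x0 \<le> t" "t \<le> x"
      have "(F has_real_derivative (2*u t*deriv u t*(1 - h t) - K * E t) * exp (-K*t)) (at t)"
        unfolding F_def by (rule derivative_eq_intros dE refl)+ (simp add: algebra_simps)
      moreover have "(2*u t*deriv u t*(1 - h t) - K * E t) * exp (-K*t) \<le> 0"
        using bound[of t] t True by (intro mult_nonpos_nonneg) auto
      ultimately show "\<exists>y. (F has_real_derivative y) (at t) \<and> y \<le> 0" by blast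
    qed
    then have "E x * exp (-K*x) \<le> 0" using E0 by (simp add: F_def)
    then show ?thesis using Ege[of x] by (simp add: mult_le_0_iff)
  next
    case False
    define F where "F t = E t * exp (K*t)" for t
    have "F x \<le> F x0"
    proof (rule DERIV_nonneg_imp_nondecreasing[of x x0 F])
      show "x \<le> x0" using False by simp
      fix t assume t: "x \<le> t" "t \<le> x0"
      have "(F has_real_derivative (2*u t*deriv u t*(1 - h t) + K * E t) * exp (K*t)) (at t)"
        unfolding F_def by (rule derivative_eq_intros dE refl)+ (simp add: algebra_simps)
      moreover have "(2*u t*deriv u t*(1 - h t) + K * E t) * exp (K*t) \<ge> 0"
        using bound[of t] t False by (intro mult_nonneg_nonneg) auto
      ultimately show "\<exists>y. (F has_real_derivative y) (at t) \<and> y \<ge> 0" by blast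
    qed
    then have "E x * exp (K*x) \<le> 0" using E0 by (simp add: F_def)
    then show ?thesis using Ege[of x] by (simp add: mult_le_0_iff)
  qed
  then show ?thesis by (simp add: E_def)
qed

lemma lin_D:
  assumes "is_solution h u1" "is_solution h u2"
  shows "((\<lambda>t. a*u1 t + b*u2 t) has_real_derivative (a*deriv u1 x + b*deriv u2 x)) (at x)"
  by (rule derivative_eq_intros sol_D1[OF assms(1)] sol_D1[OF assms(2)] refl)+ simp

lemma lin_deriv:
  assumes "is_solution h u1" "is_solution h u2"
  shows "deriv (\<lambda>t. a*u1 t + b*u2 t) x = a*deriv u1 x + b*deriv u2 x"
  by (rule DERIV_imp_deriv[OF lin_D[OF assms]])

lemma lin_sol:
  assumes "is_solution h u1" "is_solution h u2"
  shows "is_solution h (\<lambda>t. a*u1 t + b*u2 t)"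
proof -
  have e: "deriv (\<lambda>t. a*u1 t + b*u2 t) = (\<lambda>t. a*deriv u1 t + b*deriv u2 t)"
    using lin_deriv[OF assms] by blast
  show ?thesis unfolding is_solution_def e
  proof (intro allI conjI)
    fix x show "((\<lambda>t. a*u1 t + b*u2 t) has_real_derivative (a*deriv u1 x + b*deriv u2 x)) (at x)"
      by (rule lin_D[OF assms])
    show "((\<lambda>t. a*deriv u1 t + b*deriv u2 t) has_real_derivative (- h x * (a*u1 x + b*u2 x))) (at x)"
      by (rule derivative_eq_intros sol_D2[OF assms(1)] sol_D2[OF assms(2)] refl)+ (simp add: algebra_simps)
  qed
qed

lemma lin_nz:
  assumes hc: "continuous_on UNIV h" and s: "is_solution h u1" "is_solution h u2"
    and ind: "lin_indep2 u1 u2" and ab: "(A, B) \<noteq> (0, 0)"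
  shows "A*u1 x + B*u2 x \<noteq> 0 \<or> A*deriv u1 x + B*deriv u2 x \<noteq> 0"
proof (rule ccontr)
  assume "\<not> ?thesis"
  then have z: "A*u1 x + B*u2 x = 0" "deriv (\<lambda>t. A*u1 t + B*u2 t) x = 0"
    using lin_deriv[OF s] by auto
  have "\<forall>t. A*u1 t + B*u2 t = 0"
    using sol_uniq[OF hc lin_sol[OF s] _ z(2)] z(1) by blast
  then show False using ind ab unfolding lin_indep2_def by blast
qed

lemma D_pos:
  assumes hc: "continuous_on UNIV h" and s: "is_solution h u1" "is_solution h u2"
    and ind: "lin_indep2 u1 u2" and ab: "(A, B) \<noteq> (0, 0)" and P: "P > 0"
  shows "P\<^sup>2 * (A*u1 x + B*u2 x)\<^sup>2 + (A*deriv u1 x + B*deriv u2 x)\<^sup>2 > 0"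
  using lin_nz[OF hc s ind ab, of x] P
  by (metis add_pos_nonneg add_nonneg_pos mult_pos_pos zero_less_power2 zero_le_power2 power2_eq_square mult_eq_0_iff less_irrefl order_less_le)

lemma wr_nz:
  assumes hc: "continuous_on UNIV h" and s: "is_solution h u1" "is_solution h u2"
    and ind: "lin_indep2 u1 u2"
  shows "wronskian u1 u2 x \<noteq> 0"
proof
  assume W: "wronskian u1 u2 x = 0"
  let ?p1 = "u1 x" and ?p2 = "u2 x" and ?q1 = "deriv u1 x" and ?q2 = "deriv u2 x"
  have W': "?q1 * ?p2 - ?p1 * ?q2 = 0" using W by (simp add: wronskian_def)
  show False
  proof (cases "(?p2, - ?p1) = (0, 0)")
    case False
    from lin_nz[OF hc s ind False, of x] W' show False by (auto simp: algebra_simps)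
  next
    case True
    show False
    proof (cases "(?q2, - ?q1) = (0, 0)")
      case False
      from lin_nz[OF hc s ind False, of x] True show False by (auto simp: algebra_simps)
    next
      case True2: True
      have "(1::real, 0::real) \<noteq> (0, 0)" by simp
      from lin_nz[OF hc s ind this, of x] True True2 show False by auto
    qed
  qed
qed

lemma wr_const:
  assumes s: "is_solution h u1" "is_solution h u2"
  shows "wronskian u1 u2 x = wronskian u1 u2 y"
proof -
  have "\<forall>t. ((wronskian u1 u2) has_real_derivative 0) (at t)"
  proof
    fix t
    show "((wronskian u1 u2) has_real_derivative 0) (at t)"
      unfolding wronskian_def[abs_def]
      by (rule derivative_eq_intros sol_D1[OF s(1)] sol_D1[OF s(2)] sol_D2[OF s(1)] sol_D2[OF s(2)] refl)+
         (simp add: algebra_simps)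
  qed
  then show ?thesis by (rule DERIV_isconst_all)
qed


lemma iso_comp:
  assumes T1: "local_isometry_H T1" and T2: "local_isometry_H T2"
  shows "local_isometry_H (\<lambda>p. T2 (T1 p))"
  unfolding local_isometry_H_def
proof (intro conjI ballI)
  show "(\<lambda>p. T2 (T1 p)) ` upper_half_plane \<subseteq> upper_half_plane"
    using T1 T2 unfolding local_isometry_H_def by blast
next
  fix z assume z: "z \<in> upper_half_plane"
  have Tz: "T1 z \<in> upper_half_plane" using T1 z unfolding local_isometry_H_def by blast
  obtain e1 where e1: "e1 > 0" "inj_on T1 (ball z e1)" using T1 z unfolding local_isometry_H_def by blast
  obtain e2 where e2: "e2 > 0" "inj_on T2 (ball (T1 z) e2)" using T2 Tz unfolding local_isometry_H_def by blast
  obtain T1' where d1: "(T1 has_derivative T1') (at z)" using T1 z unfolding local_isometry_H_def by blast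
  have "continuous (at z) T1" by (rule has_derivative_continuous[OF d1])
  then obtain e3 where e3: "e3 > 0" "\<And>y. dist y z < e3 \<Longrightarrow> dist (T1 y) (T1 z) < e2"
    unfolding continuous_at_eps_delta using e2(1) by blast
  show "\<exists>e>0. inj_on (\<lambda>p. T2 (T1 p)) (ball z e)"
  proof (intro exI conjI)
    show "min e1 e3 > 0" using e1 e3 by simp
    show "inj_on (\<lambda>p. T2 (T1 p)) (ball z (min e1 e3))"
    proof (rule inj_onI)
      fix y1 y2 assume y: "y1 \<in> ball z (min e1 e3)" "y2 \<in> ball z (min e1 e3)"
        and eq: "T2 (T1 y1) = T2 (T1 y2)"
      have "T1 y1 \<in> ball (T1 z) e2" "T1 y2 \<in> ball (T1 z) e2"
        using e3(2)[of y1] e3(2)[of y2] y by (auto simp: dist_commute)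
      then have "T1 y1 = T1 y2" using e2(2) eq by (auto dest: inj_onD)
      then show "y1 = y2" using e1(2) y by (auto dest: inj_onD)
    qed
  qed
next
  fix z assume z: "z \<in> upper_half_plane"
  have Tz: "T1 z \<in> upper_half_plane" using T1 z unfolding local_isometry_H_def by blast
  obtain T1' where d1: "(T1 has_derivative T1') (at z)" "\<forall>v. gH (T1 z) (T1' v) = gH z v"
    using T1 z unfolding local_isometry_H_def by blast
  obtain T2' where d2: "(T2 has_derivative T2') (at (T1 z))" "\<forall>v. gH (T2 (T1 z)) (T2' v) = gH (T1 z) v"
    using T2 Tz unfolding local_isometry_H_def by blast
  show "\<exists>T'. ((\<lambda>p. T2 (T1 p)) has_derivative T') (at z) \<and> (\<forall>v. gH (T2 (T1 z)) (T' v) = gH z v)"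
  proof (intro exI conjI allI)
    show "((\<lambda>p. T2 (T1 p)) has_derivative (\<lambda>v. T2' (T1' v))) (at z)"
      using diff_chain_at[OF d1(1) d2(1)] by (simp add: o_def)
    fix v show "gH (T2 (T1 z)) (T2' (T1' v)) = gH z v" by (simp only: d2(2)[rule_format] d1(2)[rule_format])
  qed
qed

definition NN :: "real \<times> real \<Rightarrow> real \<times> real" where "NN p = (- fst p, snd p)"

lemma NN_iso: "local_isometry_H NN"
  unfolding local_isometry_H_def
proof (intro conjI ballI)
  show "NN ` upper_half_plane \<subseteq> upper_half_plane" by (auto simp: NN_def upper_half_plane_def)
  fix z :: "real \<times> real"
  show "\<exists>e>0. inj_on NN (ball z e)"
    by (rule exI[of _ 1]) (auto simp: NN_def inj_on_def prod_eq_iff)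
  have "(NN has_derivative NN) (at z)"
    unfolding NN_def[abs_def] by (rule derivative_eq_intros refl)+
  then show "\<exists>T'. (NN has_derivative T') (at z) \<and> (\<forall>v. gH (NN z) (T' v) = gH z v)"
    by (auto simp: gH_def NN_def)
qed

definition p2c :: "real \<times> real \<Rightarrow> complex" where "p2c p = Complex (fst p) (snd p)"
definition c2p :: "complex \<Rightarrow> real \<times> real" where "c2p z = (Re z, Im z)"
definition mob :: "real \<Rightarrow> real \<Rightarrow> real \<Rightarrow> real \<Rightarrow> complex \<Rightarrow> complex" where
  "mob a b c d z = (of_real a * z + of_real b) / (of_real c * z + of_real d)"

lemma bl_p2c: "bounded_linear p2c"
  by (rule bounded_linear_intro[where K=1]) (auto simp: p2c_def complex_norm norm_Pair complex_eq_iff scaleR_conv_of_real algebra_simps)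

lemma bl_c2p: "bounded_linear c2p"
  unfolding c2p_def[abs_def] by (intro bounded_linear_Pair bounded_linear_Re bounded_linear_Im)

lemma mob_den_nz:
  assumes "a*d - b*c > 0" "Im z > 0"
  shows "of_real c * z + of_real d \<noteq> 0"
proof
  assume h: "of_real c * z + of_real d = 0"
  then have "c * Im z = 0" "c * Re z + d = 0" by (auto simp: complex_eq_iff)
  then show False using assms by auto
qed

lemma mob_Im:
  "Im (mob a b c d z) = (a*d - b*c) * Im z / (cmod (of_real c * z + of_real d))\<^sup>2"
  unfolding mob_def Im_divide' by (simp add: algebra_simps)

lemma mob_iso:
  assumes det: "a*d - b*c > 0"
  shows "local_isometry_H (\<lambda>p. c2p (mob a b c d (p2c p)))"
  unfolding local_isometry_H_def
proof (intro conjI ballI)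
  show "(\<lambda>p. c2p (mob a b c d (p2c p))) ` upper_half_plane \<subseteq> upper_half_plane"
  proof
    fix y assume "y \<in> (\<lambda>p. c2p (mob a b c d (p2c p))) ` upper_half_plane"
    then obtain p where p: "snd p > 0" "y = c2p (mob a b c d (p2c p))" by (auto simp: upper_half_plane_def)
    have "of_real c * p2c p + of_real d \<noteq> 0" using mob_den_nz[OF det, of "p2c p"] p by (simp add: p2c_def)
    then show "y \<in> upper_half_plane" using p det
      by (auto simp: upper_half_plane_def c2p_def mob_Im p2c_def intro!: divide_pos_pos)
  qed
next
  fix z assume z: "z \<in> upper_half_plane"
  show "\<exists>e>0. inj_on (\<lambda>p. c2p (mob a b c d (p2c p))) (ball z e)"
  proof (intro exI conjI)
    show "snd z > 0" using z by (simp add: upper_half_plane_def)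
    show "inj_on (\<lambda>p. c2p (mob a b c d (p2c p))) (ball z (snd z))"
    proof (rule inj_onI)
      fix y1 y2 assume y: "y1 \<in> ball z (snd z)" "y2 \<in> ball z (snd z)"
        and eq: "c2p (mob a b c d (p2c y1)) = c2p (mob a b c d (p2c y2))"
      have pos: "snd y > 0" if "y \<in> ball z (snd z)" for y
        using that dist_snd_le[of z y] by (auto simp: dist_real_def)
      let ?w1 = "p2c y1" and ?w2 = "p2c y2"
      have n1: "of_real c * ?w1 + of_real d \<noteq> 0" using mob_den_nz[OF det, of ?w1] pos[OF y(1)] by (simp add: p2c_def)
      have n2: "of_real c * ?w2 + of_real d \<noteq> 0" using mob_den_nz[OF det, of ?w2] pos[OF y(2)] by (simp add: p2c_def)
      have "mob a b c d ?w1 = mob a b c d ?w2" using eq by (simp add: c2p_def complex_eq_iff)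
      then have "(of_real a * ?w1 + of_real b) * (of_real c * ?w2 + of_real d) = (of_real a * ?w2 + of_real b) * (of_real c * ?w1 + of_real d)"
        using n1 n2 by (simp add: mob_def field_simps)
      then have "of_real (a*d - b*c) * (?w1 - ?w2) = 0" by (simp add: algebra_simps)
      then have "?w1 - ?w2 = 0" using det by (metis less_irrefl mult_eq_0_iff of_real_eq_0_iff)
      then show "y1 = y2" by (simp add: p2c_def prod_eq_iff complex_eq_iff)
    qed
  qed
next
  fix z assume z: "z \<in> upper_half_plane"
  let ?w = "p2c z"
  let ?den = "of_real c * ?w + of_real d"
  let ?f' = "of_real (a*d - b*c) / ?den\<^sup>2"
  have Iw: "Im ?w > 0" using z by (simp add: p2c_def upper_half_plane_def)
  have n: "?den \<noteq> 0" using mob_den_nz[OF det Iw] .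
  have eqn: "(0 * ?w + 1 * complex_of_real a + 0) * ?den -
      (complex_of_real a * ?w + complex_of_real b) * (0 * ?w + 1 * complex_of_real c + 0) = complex_of_real (a * d - b * c)"
    by (simp add: algebra_simps)
  have dm: "(mob a b c d has_field_derivative ?f') (at ?w)"
    unfolding mob_def[abs_def]
    by (rule derivative_eq_intros refl n)+ (simp only: eqn power2_eq_square)
  have d: "((\<lambda>p. c2p (mob a b c d (p2c p))) has_derivative (\<lambda>v. c2p (?f' * p2c v))) (at z)"
    apply (rule bounded_linear.has_derivative[OF bl_c2p])
    apply (rule has_derivative_compose[OF bounded_linear_imp_has_derivative[OF bl_p2c]])
    by (rule has_field_derivative_imp_has_derivative[OF dm])
  have gm: "gH (c2p (mob a b c d ?w)) (c2p (?f' * p2c v)) = gH z v" for v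
  proof -
    define N where "N = (cmod ?den)\<^sup>2"
    have N: "N > 0" using n by (simp add: N_def)
    have e1: "(Re (?f' * p2c v))\<^sup>2 + (Im (?f' * p2c v))\<^sup>2 = (a*d-b*c)\<^sup>2 / N\<^sup>2 * ((fst v)\<^sup>2 + (snd v)\<^sup>2)"
    proof -
      have "(Re (?f' * p2c v))\<^sup>2 + (Im (?f' * p2c v))\<^sup>2 = (cmod (?f' * p2c v))\<^sup>2"
        by (simp add: cmod_power2)
      also have "\<dots> = (cmod ?f')\<^sup>2 * (cmod (p2c v))\<^sup>2" by (simp only: norm_mult power_mult_distrib)
      also have "(cmod ?f')\<^sup>2 = (a*d-b*c)\<^sup>2 / N\<^sup>2"
        by (simp only: N_def norm_divide norm_power power_divide norm_of_real power2_abs)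
      also have "(cmod (p2c v))\<^sup>2 = (fst v)\<^sup>2 + (snd v)\<^sup>2" by (simp add: p2c_def cmod_power2)
      finally show ?thesis .
    qed
    have e2: "Im (mob a b c d ?w) = (a*d-b*c) * snd z / N"
      by (simp add: mob_Im N_def p2c_def)
    have gen: "(K\<^sup>2 / N\<^sup>2 * S) / (K * y / N)\<^sup>2 = S / y\<^sup>2"
      if "K \<noteq> 0" "N > 0" "y > 0" for K N S y :: real
      using that by (simp add: field_simps power_mult_distrib)
    show ?thesis
      unfolding gH_def c2p_def fst_conv snd_conv e1 e2
      using gen[of "a*d-b*c" N "snd z"] N det Iw by (simp add: p2c_def)
  qed
  show "\<exists>T'. ((\<lambda>p. c2p (mob a b c d (p2c p))) has_derivative T') (at z) \<and>
          (\<forall>v. gH (c2p (mob a b c d (p2c z))) (T' v) = gH z v)"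
    using d gm by blast
qed


lemma antimob_iso:
  assumes det: "a*d - b*c < 0"
  shows "local_isometry_H (\<lambda>p. c2p (mob (-a) b (-c) d (p2c (NN p))))"
proof -
  have "(-a)*d - b*(-c) > 0" using det by simp
  from iso_comp[OF NN_iso mob_iso[OF this]] show ?thesis .
qed

lemma p2c_NN: "p2c (NN p) = - cnj (p2c p)"
  by (simp add: p2c_def NN_def complex_eq_iff)

lemma mob_neg_cnj: "mob (-a) b (-c) d (- cnj z) = mob a b c d (cnj z)"
  by (simp add: mob_def)

lemma mob_cnj: "mob a b c d (cnj z) = cnj (mob a b c d z)"
  by (simp add: mob_def)

definition sg :: "real \<Rightarrow> complex \<Rightarrow> complex" where "sg s z = (if s = 1 then z else cnj z)"

lemma sg_mult: "s \<in> {-1,1} \<Longrightarrow> t \<in> {-1,1} \<Longrightarrow> sg (s*t) z = sg t (sg s z)"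
  by (auto simp: sg_def)

lemma sg_sg: "sg s (sg s z) = z" by (simp add: sg_def)

lemma mob_sg: "mob a b c d (sg s z) = sg s (mob a b c d z)"
  by (simp add: sg_def mob_cnj)

lemma Psi_c0:
  fixes p1 p2 q1 q2 P X0 s :: real
  defines "D \<equiv> P\<^sup>2 * p1\<^sup>2 + q1\<^sup>2" and "W \<equiv> q1*p2 - p1*q2"
  assumes Dp: "D > 0" and Wn: "W \<noteq> 0" and s: "s \<in> {-1,1}"
  shows "sg s (Complex (X0 + s * (1/W) * ((P\<^sup>2 * p1 * p2 + q1 * q2) / D)) (P / D))
       = of_real X0 + of_real (s/W) * (Complex q2 (P*p2) / Complex q1 (P*p1))"
proof -
  have D': "q1\<^sup>2 + (P*p1)\<^sup>2 = D" by (simp add: D_def power_mult_distrib)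
  define \<rho> where "\<rho> = Complex q2 (P*p2) / Complex q1 (P*p1)"
  have re: "Re \<rho> = (P\<^sup>2 * p1 * p2 + q1 * q2) / D"
    unfolding Re_divide \<rho>_def using D' by (simp add: power2_eq_square algebra_simps)
  have im: "Im \<rho> = P * W / D"
    unfolding Im_divide \<rho>_def using D' by (simp add: W_def algebra_simps)
  have "sg s (Complex (X0 + s * (1/W) * ((P\<^sup>2 * p1 * p2 + q1 * q2) / D)) (P / D))
       = of_real X0 + of_real (s/W) * \<rho>"
    using s Wn by (auto simp: sg_def complex_eq_iff re im)
  then show ?thesis by (simp only: \<rho>_def)
qed

lemma key_alg:
  fixes s t d W0 X0' Ww b X0 c a \<rho> :: complex
  assumes s: "s = 1 \<or> s = -1" and W0: "W0 \<noteq> 0" and Ww: "Ww \<noteq> 0" and den: "b*\<rho> + a \<noteq> 0"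
  shows "((s*t*d*W0 + X0'*Ww*b* s*W0) * (X0 + s/W0*\<rho>) + (t*(c - d* s*W0*X0) + X0'*Ww*(a - b* s*W0*X0)))
        / ((Ww*b* s*W0)*(X0 + s/W0*\<rho>) + Ww*(a - b* s*W0*X0))
       = X0' + t/Ww * ((d*\<rho>+c)/(b*\<rho>+a))"
proof -
  have e1: "(Ww*b* s*W0)*(X0 + s/W0*\<rho>) + Ww*(a - b* s*W0*X0) = Ww*(b*\<rho>+a)"
    using s W0 by (auto simp: field_simps)
  have e2: "(s*t*d*W0 + X0'*Ww*b* s*W0) * (X0 + s/W0*\<rho>) + (t*(c - d* s*W0*X0) + X0'*Ww*(a - b* s*W0*X0))
      = X0'*Ww*(b*\<rho>+a) + t*(d*\<rho>+c)"
    using s W0 by (auto simp: field_simps)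
  have e3: "X0'*Ww*(b*\<rho>+a)/(Ww*(b*\<rho>+a)) = X0'" using Ww den by simp
  have e4: "t*(d*\<rho>+c)/(Ww*(b*\<rho>+a)) = t/Ww*((d*\<rho>+c)/(b*\<rho>+a))" by simp
  show ?thesis unfolding e1 e2 add_divide_distrib e3 e4 ..
qed


lemma Psi_c:
  assumes "\<Phi>\<^sup>2 * (v1 x)\<^sup>2 + (deriv v1 x)\<^sup>2 > 0" "wronskian v1 v2 x \<noteq> 0" "s \<in> {-1,1}"
  shows "sg s (p2c (Psi v1 v2 X0 s (x,\<Phi>))) = of_real X0 + of_real (s / wronskian v1 v2 x) *
           (Complex (deriv v2 x) (\<Phi> * v2 x) / Complex (deriv v1 x) (\<Phi> * v1 x))"
  using Psi_c0[of \<Phi> "v1 x" "deriv v1 x" "v2 x" "deriv v2 x" s X0] assms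
  unfolding Psi_def Let_def p2c_def wronskian_def by simp

lemma part1:
  fixes h u1 u2 :: "real \<Rightarrow> real"
  assumes hc: "continuous_on UNIV h"
    and s1: "is_solution h u1" and s2: "is_solution h u2"
    and ind: "lin_indep2 u1 u2"
    and det: "a*d - b*c \<noteq> 0" and s: "s \<in> {-1,1}" and t: "t \<in> {-1,1}"
  shows "\<exists>T. local_isometry_H T \<and> (\<forall>x \<Phi>. \<Phi> > 0 \<and> \<Phi>\<^sup>2 \<noteq> h x \<longrightarrow>
           Psi (\<lambda>x. a * u1 x + b * u2 x) (\<lambda>x. c * u1 x + d * u2 x) X0' t (x, \<Phi>) = T (Psi u1 u2 X0 s (x, \<Phi>)))"
proof -
  let ?w1 = "\<lambda>x. a * u1 x + b * u2 x" and ?w2 = "\<lambda>x. c * u1 x + d * u2 x"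
  define W0 where "W0 = wronskian u1 u2 0"
  have W0n: "W0 \<noteq> 0" unfolding W0_def by (rule wr_nz[OF hc s1 s2 ind])
  have Wx: "wronskian u1 u2 x = W0" for x unfolding W0_def by (rule wr_const[OF s1 s2])
  define Ww where "Ww = (a*d-b*c)*W0"
  have Wwn: "Ww \<noteq> 0" using W0n det by (simp add: Ww_def)
  define \<alpha> where "\<alpha> = s*t*d*W0 + X0'*Ww*b* s *W0"
  define \<beta> where "\<beta> = t*(c - d* s *W0*X0) + X0'*Ww*(a - b* s *W0*X0)"
  define \<gamma> where "\<gamma> = Ww*b* s *W0"
  define \<delta> where "\<delta> = Ww*(a - b* s *W0*X0)"
  have detT: "\<alpha>*\<delta> - \<beta>*\<gamma> = s*t*((a*d-b*c)*W0)\<^sup>2"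
    unfolding \<alpha>_def \<beta>_def \<gamma>_def \<delta>_def Ww_def by (simp add: power2_eq_square algebra_simps)
  define T where "T = (if s = t then (\<lambda>p. c2p (mob \<alpha> \<beta> \<gamma> \<delta> (p2c p)))
                        else (\<lambda>p. c2p (mob (-\<alpha>) \<beta> (-\<gamma>) \<delta> (p2c (NN p)))))"
  have sq: "((a*d-b*c)*W0)\<^sup>2 > 0" using W0n det by simp
  have iso: "local_isometry_H T"
  proof (cases "s = t")
    case True
    then have "s*t = 1" using s by auto
    then have "\<alpha>*\<delta> - \<beta>*\<gamma> > 0" using detT sq by simp
    then show ?thesis using True mob_iso unfolding T_def by simp
  next
    case False
    then have "s*t = -1" using s t by auto
    then have "\<alpha>*\<delta> - \<beta>*\<gamma> < 0" using detT sq by simp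
    then show ?thesis using False antimob_iso unfolding T_def by simp
  qed
  have Tform: "T p = c2p (mob \<alpha> \<beta> \<gamma> \<delta> (sg (s*t) (p2c p)))" for p
  proof (cases "s = t")
    case True
    then have "s*t = 1" using s by auto
    then show ?thesis using True by (simp add: T_def sg_def)
  next
    case False
    then have "s*t = -1" using s t by auto
    then show ?thesis using False by (simp add: T_def sg_def p2c_NN mob_neg_cnj)
  qed
  have main: "Psi ?w1 ?w2 X0' t (x, \<Phi>) = T (Psi u1 u2 X0 s (x, \<Phi>))" if P: "\<Phi> > 0" for x \<Phi>
  proof -
    let ?p1 = "u1 x" and ?p2 = "u2 x" and ?q1 = "deriv u1 x" and ?q2 = "deriv u2 x"
    define Z1 where "Z1 = Complex ?q1 (\<Phi> * ?p1)"
    define Z2 where "Z2 = Complex ?q2 (\<Phi> * ?p2)"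
    define \<rho> where "\<rho> = Z2 / Z1"
    have Du: "\<Phi>\<^sup>2 * (u1 x)\<^sup>2 + (deriv u1 x)\<^sup>2 > 0"
      using D_pos[OF hc s1 s2 ind _ P, of 1 0 x] by simp
    have Dw: "\<Phi>\<^sup>2 * (?w1 x)\<^sup>2 + (deriv ?w1 x)\<^sup>2 > 0"
    proof -
      have ab: "(a, b) \<noteq> (0, 0)" using det by auto
      show ?thesis using D_pos[OF hc s1 s2 ind ab P, of x] lin_deriv[OF s1 s2] by simp
    qed
    have Z1n: "Z1 \<noteq> 0"
    proof
      assume "Z1 = 0" then have "?q1 = 0" "\<Phi> * ?p1 = 0" by (auto simp: Z1_def complex_eq_iff)
      then show False using Du P by simp
    qed
    have Wwx: "wronskian ?w1 ?w2 x = Ww"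
      unfolding wronskian_def lin_deriv[OF s1 s2] Ww_def Wx[of x, symmetric]
      by (simp add: wronskian_def algebra_simps)
    have hu: "sg s (p2c (Psi u1 u2 X0 s (x,\<Phi>))) = of_real X0 + of_real (s / W0) * \<rho>"
      using Psi_c[OF Du _ s, of u2 X0] W0n Wx[of x] by (simp add: \<rho>_def Z1_def Z2_def)
    have hw0: "sg t (p2c (Psi ?w1 ?w2 X0' t (x,\<Phi>))) = of_real X0' + of_real (t / Ww) *
           (Complex (deriv ?w2 x) (\<Phi> * ?w2 x) / Complex (deriv ?w1 x) (\<Phi> * ?w1 x))"
      using Psi_c[OF Dw _ t, of ?w2 X0'] Wwx Wwn by simp
    have n1: "Complex (deriv ?w1 x) (\<Phi> * ?w1 x) = of_real a * Z1 + of_real b * Z2"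
      unfolding lin_deriv[OF s1 s2] by (simp add: Z1_def Z2_def complex_eq_iff algebra_simps)
    have n2: "Complex (deriv ?w2 x) (\<Phi> * ?w2 x) = of_real c * Z1 + of_real d * Z2"
      unfolding lin_deriv[OF s1 s2] by (simp add: Z1_def Z2_def complex_eq_iff algebra_simps)
    have n1n: "Complex (deriv ?w1 x) (\<Phi> * ?w1 x) \<noteq> 0"
    proof
      assume "Complex (deriv ?w1 x) (\<Phi> * ?w1 x) = 0"
      then have "deriv ?w1 x = 0" "\<Phi> * ?w1 x = 0" by (auto simp: complex_eq_iff)
      then show False using Dw P by simp
    qed
    have bra: "of_real b * \<rho> + of_real a = Complex (deriv ?w1 x) (\<Phi> * ?w1 x) / Z1"
      unfolding n1 \<rho>_def using Z1n by (simp add: field_simps)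
    have bran: "of_real b * \<rho> + of_real a \<noteq> 0" unfolding bra using n1n Z1n by simp
    have rw: "Complex (deriv ?w2 x) (\<Phi> * ?w2 x) / Complex (deriv ?w1 x) (\<Phi> * ?w1 x)
              = (of_real d * \<rho> + of_real c) / (of_real b * \<rho> + of_real a)"
    proof -
      have drc: "of_real d * \<rho> + of_real c = Complex (deriv ?w2 x) (\<Phi> * ?w2 x) / Z1"
        unfolding n2 \<rho>_def using Z1n by (simp add: field_simps)
      show ?thesis unfolding drc bra using Z1n n1n by (simp add: field_simps)
    qed
    have hw: "sg t (p2c (Psi ?w1 ?w2 X0' t (x,\<Phi>))) = of_real X0' + of_real (t / Ww) *
           ((of_real d * \<rho> + of_real c) / (of_real b * \<rho> + of_real a))"
      using hw0 rw by simp
    have sc: "of_real s = (1::complex) \<or> of_real s = (-1::complex)" using s by auto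
    have k: "mob \<alpha> \<beta> \<gamma> \<delta> (of_real X0 + of_real (s / W0) * \<rho>) = of_real X0' + of_real (t / Ww) *
           ((of_real d * \<rho> + of_real c) / (of_real b * \<rho> + of_real a))"
      using key_alg[OF sc, of "of_real W0" "of_real Ww" "of_real b" \<rho> "of_real a" "of_real t" "of_real d" "of_real X0'" "of_real X0" "of_real c"]
        W0n Wwn bran
      by (simp add: mob_def \<alpha>_def \<beta>_def \<gamma>_def \<delta>_def)
    have "mob \<alpha> \<beta> \<gamma> \<delta> (sg (s*t) (p2c (Psi u1 u2 X0 s (x,\<Phi>)))) = p2c (Psi ?w1 ?w2 X0' t (x,\<Phi>))"
      unfolding sg_mult[OF s t] mob_sg hu k hw[symmetric] sg_sg ..
    then show ?thesis unfolding Tform by (simp add: c2p_def p2c_def)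
  qed
  show ?thesis using iso main by blast
qed


definition DD :: "real \<Rightarrow> real \<Rightarrow> real \<Rightarrow> real" where "DD P p q = P\<^sup>2 * p\<^sup>2 + q\<^sup>2"
definition Zfn where "Zfn P p q = P / DD P p q"
definition Xfun where "Xfun P k p q = 2 * P * k * p * q / (DD P p q)\<^sup>2"
definition Yfun where "Yfun P p q = (q\<^sup>2 - P\<^sup>2 * p\<^sup>2) / (DD P p q)\<^sup>2"
definition Zp where "Zp P p q = - 2 * P^3 * p / (DD P p q)\<^sup>2"
definition Zq where "Zq P p q = - 2 * P * q / (DD P p q)\<^sup>2"
definition Xp where "Xp P k p q = 2 * P * k * (q * DD P p q - 4 * P\<^sup>2 * p\<^sup>2 * q) / (DD P p q)^3"
definition Xq where "Xq P k p q = 2 * P * k * (p * DD P p q - 4 * p * q\<^sup>2) / (DD P p q)^3"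
definition Yp where "Yp P p q = - 2 * P\<^sup>2 * p * (3 * q\<^sup>2 - P\<^sup>2 * p\<^sup>2) / (DD P p q)^3"
definition Yq where "Yq P p q = 2 * q * (3 * P\<^sup>2 * p\<^sup>2 - q\<^sup>2) / (DD P p q)^3"

lemma dDD:
  assumes dp: "(p has_real_derivative e) (at r)" and dq: "(q has_real_derivative f) (at r)"
  shows "((\<lambda>r. DD P (p r) (q r)) has_real_derivative (2*P\<^sup>2*p r*e + 2*q r*f)) (at r)"
  unfolding DD_def by (rule derivative_eq_intros dp dq refl)+ (simp add: algebra_simps)

lemma dZ:
  assumes dp: "(p has_real_derivative e) (at r)" and dq: "(q has_real_derivative f) (at r)"
    and nz: "DD P (p r) (q r) \<noteq> 0"
  shows "((\<lambda>r. Zfn P (p r) (q r)) has_real_derivative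
           (Zp P (p r) (q r) * e + Zq P (p r) (q r) * f)) (at r)"
  unfolding Zfn_def
  by (rule derivative_eq_intros dDD[OF dp dq] refl nz)+
     (use nz in \<open>simp add: Zp_def Zq_def field_simps power2_eq_square power3_eq_cube\<close>)

lemma dX:
  assumes dp: "(p has_real_derivative e) (at r)" and dq: "(q has_real_derivative f) (at r)"
    and nz: "DD P (p r) (q r) \<noteq> 0"
  shows "((\<lambda>r. Xfun P k (p r) (q r)) has_real_derivative
           (Xp P k (p r) (q r) * e + Xq P k (p r) (q r) * f)) (at r)"
  unfolding Xfun_def Xp_def Xq_def
  apply (rule derivative_eq_intros dDD[OF dp dq] dp dq refl nz)+
  using nz apply (simp_all add: field_simps)
  apply algebra
  done

lemma dY:
  assumes dp: "(p has_real_derivative e) (at r)" and dq: "(q has_real_derivative f) (at r)"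
    and nz: "DD P (p r) (q r) \<noteq> 0"
  shows "((\<lambda>r. Yfun P (p r) (q r)) has_real_derivative
           (Yp P (p r) (q r) * e + Yq P (p r) (q r) * f)) (at r)"
  unfolding Yfun_def Yp_def Yq_def
  apply (rule derivative_eq_intros dDD[OF dp dq] dp dq refl nz)+
  using nz apply (simp_all add: field_simps)
  unfolding DD_def apply algebra
  done

lemma minor1:
  assumes "DD P p q \<noteq> 0"
  shows "Zp P p q * Xq P k p q - Zq P p q * Xp P k p q = 4 * P\<^sup>2 * k * (q\<^sup>2 - P\<^sup>2 * p\<^sup>2) / (DD P p q)^4"
  unfolding Zp_def Zq_def Xp_def Xq_def using assms
  by (simp add: field_simps) algebra

lemma minor2:
  assumes "DD P p q \<noteq> 0"
  shows "Zp P p q * Yq P p q - Zq P p q * Yp P p q = - 8 * P^3 * p * q / (DD P p q)^4"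
  unfolding Zp_def Zq_def Yp_def Yq_def using assms
  apply (simp add: field_simps)
  unfolding DD_def by algebra

lemma ZX:
  assumes "DD P p q \<noteq> 0" "f = - H * p"
  shows "Zp P p q * q + Zq P p q * f = Xfun P (H - P\<^sup>2) p q"
  unfolding Zp_def Zq_def Xfun_def using assms
  by (simp add: field_simps power3_eq_cube power2_eq_square)

lemma FZ:
  assumes "DD P p q \<noteq> 0" "H - P\<^sup>2 \<noteq> 0"
  shows "(P / (H - P\<^sup>2) * Xfun P (H - P\<^sup>2) p q)\<^sup>2 + (P * Yfun P p q)\<^sup>2 - (Zfn P p q)\<^sup>2 = 0"
  unfolding Zfn_def Xfun_def Yfun_def using assms
  apply (simp add: field_simps)
  unfolding DD_def by algebra

lemma dPhi:
  assumes nz: "DD P p q \<noteq> 0"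
  shows "((\<lambda>r. Zfn r p q) has_real_derivative Yfun P p q) (at P)"
proof -
  have dD: "((\<lambda>r. DD r p q) has_real_derivative 2*P*p\<^sup>2) (at P)"
    unfolding DD_def by (rule derivative_eq_intros refl)+ simp
  show ?thesis
    unfolding Zfn_def Yfun_def
    apply (rule derivative_eq_intros dD refl nz)+
    using nz apply (simp_all add: field_simps)
    unfolding DD_def apply algebra
    done
qed


lemma dir1: "((\<lambda>r. r*c1 + c2) has_real_derivative c1) (at r)"
  by (rule derivative_eq_intros refl)+ simp
lemma dir2: "((\<lambda>r. c2 + r*c1) has_real_derivative c1) (at r)"
  by (rule derivative_eq_intros refl)+ simp

lemma dreal: "(f has_real_derivative D) (at x) \<Longrightarrow> f differentiable (at x)"
  using real_differentiable_def by blast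

lemma part2:
  fixes h u1 u2 :: "real \<Rightarrow> real"
  assumes hc: "continuous_on UNIV h"
    and s1: "is_solution h u1" and s2: "is_solution h u2"
    and ind: "lin_indep2 u1 u2"
  shows "complete_integral
       (\<lambda>x \<Phi> Y p q. (\<Phi> / (h x - \<Phi>\<^sup>2) * p)\<^sup>2 + (\<Phi> * q)\<^sup>2 - Y\<^sup>2)
       {(x, \<Phi>). \<Phi> > 0 \<and> \<Phi>\<^sup>2 \<noteq> h x}
       {(A, B). (A, B) \<noteq> (0, 0)}
       (\<lambda>A B x \<Phi>. \<Phi> / (\<Phi>\<^sup>2 * (A * u1 x + B * u2 x)\<^sup>2
                      + (deriv (\<lambda>t. A * u1 t + B * u2 t) x)\<^sup>2))"
    (is "complete_integral ?F ?S ?P ?\<phi>")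
proof -
  have \<phi>eq: "?\<phi> a b x' \<Phi>' = Zfn \<Phi>' (a*u1 x' + b*u2 x') (a*deriv u1 x' + b*deriv u2 x')" for a b x' \<Phi>'
    by (simp add: Zfn_def DD_def lin_deriv[OF s1 s2])
  have DDnz: "DD \<Phi> (a*u1 x + b*u2 x) (a*deriv u1 x + b*deriv u2 x) \<noteq> 0"
    if "(a,b) \<noteq> (0,0)" "\<Phi> > 0" for a b x \<Phi>
    using D_pos[OF hc s1 s2 ind that, of x] by (simp add: DD_def)
  have Z00: "Zfn \<Phi> (0*u1 x + 0*u2 x) (0*deriv u1 x + 0*deriv u2 x) = 0" for \<Phi> x
    by (simp add: Zfn_def DD_def)
  have dx: "((\<lambda>r. ?\<phi> a b r \<Phi>) has_real_derivative
             Xfun \<Phi> (h x - \<Phi>\<^sup>2) (a*u1 x + b*u2 x) (a*deriv u1 x + b*deriv u2 x)) (at x)"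
    if P: "\<Phi> > 0" for a b x \<Phi>
  proof (cases "(a,b) = (0,0)")
    case True
    then show ?thesis unfolding \<phi>eq using Z00 by (simp add: Xfun_def DD_def Zfn_def)
  next
    case False
    have dq: "((\<lambda>r. a*deriv u1 r + b*deriv u2 r) has_real_derivative (a*(-h x*u1 x) + b*(-h x*u2 x))) (at x)"
      by (rule derivative_eq_intros sol_D2[OF s1] sol_D2[OF s2] refl)+ (simp add: algebra_simps)
    have "Zp \<Phi> (a*u1 x + b*u2 x) (a*deriv u1 x + b*deriv u2 x) * (a*deriv u1 x + b*deriv u2 x)
        + Zq \<Phi> (a*u1 x + b*u2 x) (a*deriv u1 x + b*deriv u2 x) * (a*(-h x*u1 x) + b*(-h x*u2 x))
        = Xfun \<Phi> (h x - \<Phi>\<^sup>2) (a*u1 x + b*u2 x) (a*deriv u1 x + b*deriv u2 x)"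
      by (rule ZX[OF DDnz[OF False P]]) (simp add: algebra_simps)
    then show ?thesis unfolding \<phi>eq
      using dZ[OF lin_D[OF s1 s2] dq DDnz[OF False P]] by simp
  qed
  have dP: "((\<lambda>r. ?\<phi> a b x r) has_real_derivative
             Yfun \<Phi> (a*u1 x + b*u2 x) (a*deriv u1 x + b*deriv u2 x)) (at \<Phi>)"
    if P: "\<Phi> > 0" for a b x \<Phi>
  proof (cases "(a,b) = (0,0)")
    case True
    then show ?thesis unfolding \<phi>eq by (simp add: Yfun_def DD_def Zfn_def)
  next
    case False
    show ?thesis unfolding \<phi>eq by (rule dPhi[OF DDnz[OF False P]])
  qed
  show ?thesis unfolding complete_integral_def Let_def
  proof (intro allI impI)
    fix A B x \<Phi> assume asm: "(A, B) \<in> ?P \<and> (x, \<Phi>) \<in> ?S"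
    then have AB: "(A,B) \<noteq> (0,0)" and P: "\<Phi> > 0" and hk: "h x - \<Phi>\<^sup>2 \<noteq> 0" by auto
    define k where "k = h x - \<Phi>\<^sup>2"
    have zeq: "(\<lambda>a b. ?\<phi> a b x \<Phi>) = (\<lambda>a b. Zfn \<Phi> (a*u1 x + b*u2 x) (a*deriv u1 x + b*deriv u2 x))"
      by (intro ext) (rule \<phi>eq)
    have zxeq: "(\<lambda>a b. pd1 (?\<phi> a b) x \<Phi>) = (\<lambda>a b. Xfun \<Phi> k (a*u1 x + b*u2 x) (a*deriv u1 x + b*deriv u2 x))"
      unfolding pd1_def k_def by (intro ext DERIV_imp_deriv dx P)
    have zyeq: "(\<lambda>a b. pd2 (?\<phi> a b) x \<Phi>) = (\<lambda>a b. Yfun \<Phi> (a*u1 x + b*u2 x) (a*deriv u1 x + b*deriv u2 x))"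
      unfolding pd2_def by (intro ext DERIV_imp_deriv dP P)
    let ?p = "A*u1 x + B*u2 x" and ?q = "A*deriv u1 x + B*deriv u2 x"
    have nz: "DD \<Phi> ?p ?q \<noteq> 0" by (rule DDnz[OF AB P])
    have nzA: "DD \<Phi> (A*u1 x + B*u2 x) (A*deriv u1 x + B*deriv u2 x) \<noteq> 0" by (rule nz)
    have zA: "((\<lambda>r. Zfn \<Phi> (r*u1 x + B*u2 x) (r*deriv u1 x + B*deriv u2 x)) has_real_derivative
        Zp \<Phi> ?p ?q * u1 x + Zq \<Phi> ?p ?q * deriv u1 x) (at A)"
      using dZ[where p="\<lambda>r. r*u1 x + B*u2 x" and q="\<lambda>r. r*deriv u1 x + B*deriv u2 x" and e="u1 x" and f="deriv u1 x" and r=A and P=\<Phi>, OF dir1 dir1] nz by simp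
    have zB: "((\<lambda>r. Zfn \<Phi> (A*u1 x + r*u2 x) (A*deriv u1 x + r*deriv u2 x)) has_real_derivative
        Zp \<Phi> ?p ?q * u2 x + Zq \<Phi> ?p ?q * deriv u2 x) (at B)"
      using dZ[where p="\<lambda>r. A*u1 x + r*u2 x" and q="\<lambda>r. A*deriv u1 x + r*deriv u2 x" and e="u2 x" and f="deriv u2 x" and r=B and P=\<Phi>, OF dir2 dir2] nz by simp
    have xA: "((\<lambda>r. Xfun \<Phi> k (r*u1 x + B*u2 x) (r*deriv u1 x + B*deriv u2 x)) has_real_derivative
        Xp \<Phi> k ?p ?q * u1 x + Xq \<Phi> k ?p ?q * deriv u1 x) (at A)"
      using dX[where p="\<lambda>r. r*u1 x + B*u2 x" and q="\<lambda>r. r*deriv u1 x + B*deriv u2 x" and e="u1 x" and f="deriv u1 x" and r=A and P=\<Phi> and k=k, OF dir1 dir1] nz by simp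
    have xB: "((\<lambda>r. Xfun \<Phi> k (A*u1 x + r*u2 x) (A*deriv u1 x + r*deriv u2 x)) has_real_derivative
        Xp \<Phi> k ?p ?q * u2 x + Xq \<Phi> k ?p ?q * deriv u2 x) (at B)"
      using dX[where p="\<lambda>r. A*u1 x + r*u2 x" and q="\<lambda>r. A*deriv u1 x + r*deriv u2 x" and e="u2 x" and f="deriv u2 x" and r=B and P=\<Phi> and k=k, OF dir2 dir2] nz by simp
    have yA: "((\<lambda>r. Yfun \<Phi> (r*u1 x + B*u2 x) (r*deriv u1 x + B*deriv u2 x)) has_real_derivative
        Yp \<Phi> ?p ?q * u1 x + Yq \<Phi> ?p ?q * deriv u1 x) (at A)"
      using dY[where p="\<lambda>r. r*u1 x + B*u2 x" and q="\<lambda>r. r*deriv u1 x + B*deriv u2 x" and e="u1 x" and f="deriv u1 x" and r=A and P=\<Phi>, OF dir1 dir1] nz by simp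
    have yB: "((\<lambda>r. Yfun \<Phi> (A*u1 x + r*u2 x) (A*deriv u1 x + r*deriv u2 x)) has_real_derivative
        Yp \<Phi> ?p ?q * u2 x + Yq \<Phi> ?p ?q * deriv u2 x) (at B)"
      using dY[where p="\<lambda>r. A*u1 x + r*u2 x" and q="\<lambda>r. A*deriv u1 x + r*deriv u2 x" and e="u2 x" and f="deriv u2 x" and r=B and P=\<Phi>, OF dir2 dir2] nz by simp
    have W: "u1 x * deriv u2 x - u2 x * deriv u1 x \<noteq> 0"
      using wr_nz[OF hc s1 s2 ind, of x] by (simp add: wronskian_def algebra_simps)
    have m: "(Zp \<Phi> ?p ?q * u1 x + Zq \<Phi> ?p ?q * deriv u1 x) * (X2 * u2 x + X3 * deriv u2 x)
           - (Zp \<Phi> ?p ?q * u2 x + Zq \<Phi> ?p ?q * deriv u2 x) * (X2 * u1 x + X3 * deriv u1 x)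
           = (Zp \<Phi> ?p ?q * X3 - Zq \<Phi> ?p ?q * X2) * (u1 x * deriv u2 x - u2 x * deriv u1 x)" for X2 X3
      by (simp add: algebra_simps)
    have minors: "(Zp \<Phi> ?p ?q * Xq \<Phi> k ?p ?q - Zq \<Phi> ?p ?q * Xp \<Phi> k ?p ?q) \<noteq> 0 \<or>
                  (Zp \<Phi> ?p ?q * Yq \<Phi> ?p ?q - Zq \<Phi> ?p ?q * Yp \<Phi> ?p ?q) \<noteq> 0"
    proof (cases "?q\<^sup>2 = \<Phi>\<^sup>2 * ?p\<^sup>2")
      case False
      then show ?thesis using minor1[OF nz, of k] nz hk P by (simp add: k_def)
    next
      case True
      have "?p \<noteq> 0" "?q \<noteq> 0" using nz True P by (auto simp: DD_def)
      then show ?thesis using minor2[OF nz] nz P by simp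
    qed
    show "has_partials (?\<phi> A B) x \<Phi> \<and>
        ?F x \<Phi> (?\<phi> A B x \<Phi>) (pd1 (?\<phi> A B) x \<Phi>) (pd2 (?\<phi> A B) x \<Phi>) = 0 \<and>
        has_partials (\<lambda>a b. ?\<phi> a b x \<Phi>) A B \<and>
        has_partials (\<lambda>a b. pd1 (?\<phi> a b) x \<Phi>) A B \<and>
        has_partials (\<lambda>a b. pd2 (?\<phi> a b) x \<Phi>) A B \<and>
        (pd1 (\<lambda>a b. ?\<phi> a b x \<Phi>) A B * pd2 (\<lambda>a b. pd1 (?\<phi> a b) x \<Phi>) A B -
         pd2 (\<lambda>a b. ?\<phi> a b x \<Phi>) A B * pd1 (\<lambda>a b. pd1 (?\<phi> a b) x \<Phi>) A B \<noteq> 0 \<or>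
         pd1 (\<lambda>a b. ?\<phi> a b x \<Phi>) A B * pd2 (\<lambda>a b. pd2 (?\<phi> a b) x \<Phi>) A B -
         pd2 (\<lambda>a b. ?\<phi> a b x \<Phi>) A B * pd1 (\<lambda>a b. pd2 (?\<phi> a b) x \<Phi>) A B \<noteq> 0 \<or>
         pd1 (\<lambda>a b. pd1 (?\<phi> a b) x \<Phi>) A B * pd2 (\<lambda>a b. pd2 (?\<phi> a b) x \<Phi>) A B -
         pd2 (\<lambda>a b. pd1 (?\<phi> a b) x \<Phi>) A B * pd1 (\<lambda>a b. pd2 (?\<phi> a b) x \<Phi>) A B \<noteq> 0)"
      unfolding zeq zxeq zyeq
    proof (intro conjI)
      show "has_partials (?\<phi> A B) x \<Phi>"
        unfolding has_partials_def using dreal[OF dx[OF P]] dreal[OF dP[OF P]] by blast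
      have e1: "pd1 (?\<phi> A B) x \<Phi> = Xfun \<Phi> k ?p ?q"
        using fun_cong[OF fun_cong[OF zxeq, of A], of B] by simp
      have e2: "pd2 (?\<phi> A B) x \<Phi> = Yfun \<Phi> ?p ?q"
        using fun_cong[OF fun_cong[OF zyeq, of A], of B] by simp
      have e3: "?\<phi> A B x \<Phi> = Zfn \<Phi> ?p ?q" by (rule \<phi>eq)
      show "?F x \<Phi> (?\<phi> A B x \<Phi>) (pd1 (?\<phi> A B) x \<Phi>) (pd2 (?\<phi> A B) x \<Phi>) = 0"
        unfolding e1 e2 e3 using FZ[OF nz hk] by (simp add: k_def)
      show "has_partials (\<lambda>a b. Zfn \<Phi> (a*u1 x + b*u2 x) (a*deriv u1 x + b*deriv u2 x)) A B"
        unfolding has_partials_def using dreal[OF zA] dreal[OF zB] by simp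
      show "has_partials (\<lambda>a b. Xfun \<Phi> k (a*u1 x + b*u2 x) (a*deriv u1 x + b*deriv u2 x)) A B"
        unfolding has_partials_def using dreal[OF xA] dreal[OF xB] by simp
      show "has_partials (\<lambda>a b. Yfun \<Phi> (a*u1 x + b*u2 x) (a*deriv u1 x + b*deriv u2 x)) A B"
        unfolding has_partials_def using dreal[OF yA] dreal[OF yB] by simp
      show "pd1 (\<lambda>a b. Zfn \<Phi> (a*u1 x + b*u2 x) (a*deriv u1 x + b*deriv u2 x)) A B *
          pd2 (\<lambda>a b. Xfun \<Phi> k (a*u1 x + b*u2 x) (a*deriv u1 x + b*deriv u2 x)) A B -
          pd2 (\<lambda>a b. Zfn \<Phi> (a*u1 x + b*u2 x) (a*deriv u1 x + b*deriv u2 x)) A B *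
          pd1 (\<lambda>a b. Xfun \<Phi> k (a*u1 x + b*u2 x) (a*deriv u1 x + b*deriv u2 x)) A B \<noteq> 0 \<or>
          pd1 (\<lambda>a b. Zfn \<Phi> (a*u1 x + b*u2 x) (a*deriv u1 x + b*deriv u2 x)) A B *
          pd2 (\<lambda>a b. Yfun \<Phi> (a*u1 x + b*u2 x) (a*deriv u1 x + b*deriv u2 x)) A B -
          pd2 (\<lambda>a b. Zfn \<Phi> (a*u1 x + b*u2 x) (a*deriv u1 x + b*deriv u2 x)) A B *
          pd1 (\<lambda>a b. Yfun \<Phi> (a*u1 x + b*u2 x) (a*deriv u1 x + b*deriv u2 x)) A B \<noteq> 0 \<or>
          pd1 (\<lambda>a b. Xfun \<Phi> k (a*u1 x + b*u2 x) (a*deriv u1 x + b*deriv u2 x)) A B *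
          pd2 (\<lambda>a b. Yfun \<Phi> (a*u1 x + b*u2 x) (a*deriv u1 x + b*deriv u2 x)) A B -
          pd2 (\<lambda>a b. Xfun \<Phi> k (a*u1 x + b*u2 x) (a*deriv u1 x + b*deriv u2 x)) A B *
          pd1 (\<lambda>a b. Yfun \<Phi> (a*u1 x + b*u2 x) (a*deriv u1 x + b*deriv u2 x)) A B \<noteq> 0"
        unfolding pd1_def pd2_def
        unfolding DERIV_imp_deriv[OF zA] DERIV_imp_deriv[OF zB] DERIV_imp_deriv[OF xA]
          DERIV_imp_deriv[OF xB] DERIV_imp_deriv[OF yA] DERIV_imp_deriv[OF yB]
        unfolding m using minors W by auto
    qed
  qed
qed


theorem corollary2p15:
  fixes h u1 u2 :: "real \<Rightarrow> real"
  assumes hcont: "continuous_on UNIV h"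
    and sol1: "is_solution h u1" and sol2: "is_solution h u2"
    and indep: "lin_indep2 u1 u2"
  shows
    "(\<forall>a b c d :: real. a * d - b * c \<noteq> 0 \<longrightarrow>
       (let w1 = (\<lambda>x. a * u1 x + b * u2 x); w2 = (\<lambda>x. c * u1 x + d * u2 x) in
        is_solution h w1 \<and> is_solution h w2 \<and> lin_indep2 w1 w2 \<and>
        (\<forall>X0 s X0' s'. s \<in> {-1, 1} \<and> s' \<in> {-1, 1} \<longrightarrow>
           (\<exists>T. local_isometry_H T \<and>
              (\<forall>x \<Phi>. \<Phi> > 0 \<and> \<Phi>\<^sup>2 \<noteq> h x \<longrightarrow>
                 Psi w1 w2 X0' s' (x, \<Phi>) = T (Psi u1 u2 X0 s (x, \<Phi>)))))))
     \<and>
     complete_integral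
       (\<lambda>x \<Phi> Y p q. (\<Phi> / (h x - \<Phi>\<^sup>2) * p)\<^sup>2 + (\<Phi> * q)\<^sup>2 - Y\<^sup>2)
       {(x, \<Phi>). \<Phi> > 0 \<and> \<Phi>\<^sup>2 \<noteq> h x}
       {(A, B). (A, B) \<noteq> (0, 0)}
       (\<lambda>A B x \<Phi>. \<Phi> / (\<Phi>\<^sup>2 * (A * u1 x + B * u2 x)\<^sup>2
                      + (deriv (\<lambda>t. A * u1 t + B * u2 t) x)\<^sup>2))"
proof -
  have P1: "\<forall>a b c d :: real. a * d - b * c \<noteq> 0 \<longrightarrow>
       (let w1 = (\<lambda>x. a * u1 x + b * u2 x); w2 = (\<lambda>x. c * u1 x + d * u2 x) in
        is_solution h w1 \<and> is_solution h w2 \<and> lin_indep2 w1 w2 \<and>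
        (\<forall>X0 s X0' s'. s \<in> {-1, 1} \<and> s' \<in> {-1, 1} \<longrightarrow>
           (\<exists>T. local_isometry_H T \<and>
              (\<forall>x \<Phi>. \<Phi> > 0 \<and> \<Phi>\<^sup>2 \<noteq> h x \<longrightarrow>
                 Psi w1 w2 X0' s' (x, \<Phi>) = T (Psi u1 u2 X0 s (x, \<Phi>))))))"
  proof (intro allI impI)
    fix a b c d :: real assume det: "a * d - b * c \<noteq> 0"
    have li: "lin_indep2 (\<lambda>x. a * u1 x + b * u2 x) (\<lambda>x. c * u1 x + d * u2 x)"
      unfolding lin_indep2_def
    proof (intro allI impI)
      fix \<alpha> \<beta> assume h0: "\<forall>x. \<alpha> * (a * u1 x + b * u2 x) + \<beta> * (c * u1 x + d * u2 x) = 0"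
      have "\<forall>x. (\<alpha>*a + \<beta>*c) * u1 x + (\<alpha>*b + \<beta>*d) * u2 x = 0"
        using h0 by (simp add: algebra_simps)
      then have z: "\<alpha>*a + \<beta>*c = 0" "\<alpha>*b + \<beta>*d = 0" using indep unfolding lin_indep2_def by blast+
      have "\<alpha> * (a * d - b * c) = d * (\<alpha>*a + \<beta>*c) - c * (\<alpha>*b + \<beta>*d)" by (simp add: algebra_simps)
      then have "\<alpha> = 0" using z det by simp
      moreover have "\<beta> * (a * d - b * c) = a * (\<alpha>*b + \<beta>*d) - b * (\<alpha>*a + \<beta>*c)" by (simp add: algebra_simps)
      then have "\<beta> = 0" using z det by simp
      ultimately show "\<alpha> = 0 \<and> \<beta> = 0" by simp
    qed
    show "let w1 = (\<lambda>x. a * u1 x + b * u2 x); w2 = (\<lambda>x. c * u1 x + d * u2 x) in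
        is_solution h w1 \<and> is_solution h w2 \<and> lin_indep2 w1 w2 \<and>
        (\<forall>X0 s X0' s'. s \<in> {-1, 1} \<and> s' \<in> {-1, 1} \<longrightarrow>
           (\<exists>T. local_isometry_H T \<and>
              (\<forall>x \<Phi>. \<Phi> > 0 \<and> \<Phi>\<^sup>2 \<noteq> h x \<longrightarrow>
                 Psi w1 w2 X0' s' (x, \<Phi>) = T (Psi u1 u2 X0 s (x, \<Phi>)))))"
      unfolding Let_def
      using lin_sol[OF sol1 sol2, of a b] lin_sol[OF sol1 sol2, of c d] li
        part1[OF hcont sol1 sol2 indep det] by blast
  qed
  show ?thesis using P1 part2[OF hcont sol1 sol2 indep] by blast
qed

end
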